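(* Let $(G,\mathscr{T})$ be a Hausdorff topological group which is not $g$-reversible. Then there exists a Hausdorff group topology $\mathscr{T}'$ on $G$ such that $w(G,\mathscr{T}')\le nw(G,\mathscr{T})$ and $(G,\mathscr{T}')$ is not $g$-reversible.
   Context: All topological groups are assumed Hausdorff. A topological group $G$ is called $g$-reversible if every continuous automorphism of $G$ (i.e. every continuous group isomorphism of $G$ onto itself) is an open map. $w(X)$ denotes the weight of a space $X$ (minimal cardinality of a base) and $nw(X)$ its network weight (minimal cardinality of a network). *)

theory Defs
  imports "HOL-Analysis.Analysis" "HOL-Algebra.Group"
begin

definition topological_group :: "('a, 'b) monoid_scheme \<Rightarrow> 'a topology \<Rightarrow> bool" where
  "topological_group G T \<longleftrightarrow> group G \<and> topspace T = carrier G \<and>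
     continuous_map (prod_topology T T) T (\<lambda>(x, y). x \<otimes>\<^bsub>G\<^esub> y) \<and>
     continuous_map T T (\<lambda>x. inv\<^bsub>G\<^esub> x)"

definition hausdorff_group_topology :: "('a, 'b) monoid_scheme \<Rightarrow> 'a topology \<Rightarrow> bool" where
  "hausdorff_group_topology G T \<longleftrightarrow> topological_group G T \<and> Hausdorff_space T"

definition g_reversible :: "('a, 'b) monoid_scheme \<Rightarrow> 'a topology \<Rightarrow> bool" where
  "g_reversible G T \<longleftrightarrow>
     (\<forall>f. f \<in> iso G G \<and> continuous_map T T f \<longrightarrow> open_map T T f)"

definition is_base :: "'a topology \<Rightarrow> 'a set set \<Rightarrow> bool" where
  "is_base T B \<longleftrightarrow> (\<forall>V\<in>B. openin T V) \<and>
     (\<forall>U. openin T U \<longrightarrow> (\<exists>\<F>. \<F> \<subseteq> B \<and> \<Union>\<F> = U))"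

definition is_network :: "'a topology \<Rightarrow> 'a set set \<Rightarrow> bool" where
  "is_network T N \<longleftrightarrow> (\<forall>A\<in>N. A \<subseteq> topspace T) \<and>
     (\<forall>U x. openin T U \<and> x \<in> U \<longrightarrow> (\<exists>A\<in>N. x \<in> A \<and> A \<subseteq> U))"

text \<open>w(T') \<le> nw(T): some base of T' has cardinality at most that of every network of T
  (equivalently, at most the minimum cardinality of a network of T).\<close>
definition weight_le_netweight :: "'a topology \<Rightarrow> 'a topology \<Rightarrow> bool" where
  "weight_le_netweight T' T \<longleftrightarrow>
     (\<exists>B. is_base T' B \<and> (\<forall>N. is_network T N \<longrightarrow> (card_of B, card_of N) \<in> ordLeq))"

end

theory Submission imports Defs begin
unbundle cardinal_syntax


locale tgrp = group G for G (structure) +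
  fixes T :: "'a topology"
  assumes top: "topspace T = carrier G"
  and mcont: "continuous_map (prod_topology T T) T (\<lambda>(x,y). x \<otimes> y)"
  and icont: "continuous_map T T (\<lambda>x. inv x)"
begin

lemma cont_mul:
  assumes "continuous_map X T g" "continuous_map X T h"
  shows "continuous_map X T (\<lambda>x. g x \<otimes> h x)"
proof -
  have "continuous_map X T ((\<lambda>(x,y). x \<otimes> y) \<circ> (\<lambda>x. (g x, h x)))"
    by (intro continuous_map_compose[OF _ mcont] continuous_map_pairedI assms)
  then show ?thesis by (simp add: o_def)
qed

lemma cont_inv:
  assumes "continuous_map X T g"
  shows "continuous_map X T (\<lambda>x. inv (g x))"
proof -
  have "continuous_map X T ((\<lambda>x. inv x) \<circ> g)"
    by (intro continuous_map_compose[OF assms icont])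
  then show ?thesis by (simp add: o_def)
qed

lemma cont_const: "c \<in> carrier G \<Longrightarrow> continuous_map X T (\<lambda>x. c)"
  by (simp add: top)

lemma lt_open:
  assumes "openin T S0" "g \<in> carrier G"
  shows "openin T ((\<lambda>y. g \<otimes> y) ` S0)"
proof -
  have c: "continuous_map T T (\<lambda>y. inv g \<otimes> y)"
    using assms by (intro cont_mul cont_const continuous_map_id[unfolded id_def]) auto
  have "(\<lambda>y. g \<otimes> y) ` S0 = {y \<in> topspace T. inv g \<otimes> y \<in> S0}"
  proof
    show "(\<lambda>y. g \<otimes> y) ` S0 \<subseteq> {y \<in> topspace T. inv g \<otimes> y \<in> S0}"
      using assms openin_subset[OF assms(1)] top by (auto simp: m_assoc[symmetric])
    show "{y \<in> topspace T. inv g \<otimes> y \<in> S0} \<subseteq> (\<lambda>y. g \<otimes> y) ` S0"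
    proof
      fix y assume y: "y \<in> {y \<in> topspace T. inv g \<otimes> y \<in> S0}"
      then have "y = g \<otimes> (inv g \<otimes> y)" using assms top by (simp add: m_assoc[symmetric])
      then show "y \<in> (\<lambda>y. g \<otimes> y) ` S0" using y by blast
    qed
  qed
  then show ?thesis using openin_continuous_map_preimage[OF c assms(1)] by simp
qed


lemma cancel1 [simp]: "y \<in> carrier G \<Longrightarrow> z \<in> carrier G \<Longrightarrow> y \<otimes> (inv y \<otimes> z) = z"
  by (simp add: m_assoc[symmetric])
lemma cancel2 [simp]: "y \<in> carrier G \<Longrightarrow> z \<in> carrier G \<Longrightarrow> inv y \<otimes> (y \<otimes> z) = z"
  by (simp add: m_assoc[symmetric])

lemma test: "x \<in> carrier G \<Longrightarrow> y \<in> carrier G \<Longrightarrow> a \<in> carrier G \<Longrightarrow> b \<in> carrier G \<Longrightarrow>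
   x \<otimes> a \<otimes> (y \<otimes> b) = x \<otimes> y \<otimes> (inv y \<otimes> a \<otimes> y \<otimes> b)"
  by (simp add: m_assoc)
lemma test2: "x \<in> carrier G \<Longrightarrow> a \<in> carrier G \<Longrightarrow> 
   inv (x \<otimes> a) = inv x \<otimes> (x \<otimes> inv a \<otimes> inv x)"
  by (simp add: m_assoc inv_mult_group)
end

locale constr = tgrp +
  fixes N :: "'a set set" and f :: "'a \<Rightarrow> 'a" and U0 :: "'a set"
  assumes haus: "Hausdorff_space T"
  and net: "is_network T N" and infN: "infinite N"
  and fiso: "f \<in> iso G G" and fcont: "continuous_map T T f"
  and U0o: "openin T U0" and U01: "\<one> \<in> U0"
  and U0bad: "\<not> (\<exists>W. openin T W \<and> \<one> \<in> W \<and> W \<subseteq> f ` U0)"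
begin

definition nb where "nb V \<longleftrightarrow> openin T V \<and> \<one> \<in> V"
definition good where "good y U V \<longleftrightarrow> (\<forall>a\<in>V. \<forall>b\<in>V. inv y \<otimes> a \<otimes> y \<otimes> b \<in> U \<and>
   y \<otimes> inv a \<otimes> inv y \<in> U \<and> a \<otimes> b \<in> U \<and> inv a \<otimes> b \<in> U \<and> a \<otimes> inv b \<in> U \<and> f a \<in> U)"
definition chc where "chc A U = (if \<exists>V. nb V \<and> (\<forall>y\<in>A. good y U V)
   then SOME V. nb V \<and> (\<forall>y\<in>A. good y U V) else U)"
definition sepc where "sepc A = (if \<exists>V. nb V \<and> V \<inter> A = {} then SOME V. nb V \<and> V \<inter> A = {} else U0)"
definition stepc where "stepc F = F \<union> (\<lambda>(U,U'). U \<inter> U') ` (F \<times> F) \<union> (\<lambda>(A,U). chc A U) ` (N \<times> F)"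
definition F0 where "F0 = insert U0 (sepc ` N)"
definition Us where "Us = (\<Union>n. (stepc ^^ n) F0)"

lemma fhom: "f \<in> hom G G" using fiso by (simp add: iso_def)

lemma nb_sub: "nb V \<Longrightarrow> V \<subseteq> carrier G"
  using openin_subset top nb_def by auto

lemma fcar: "x \<in> carrier G \<Longrightarrow> f x \<in> carrier G"
  using fhom by (auto simp: hom_def)

lemma f1: "f \<one> = \<one>"
  using fhom by (simp add: hom_one group_axioms)

lemma exist_good:
  assumes "nb U" "y \<in> carrier G"
  shows "\<exists>A\<in>N. y \<in> A \<and> (\<exists>V. nb V \<and> (\<forall>y\<in>A. good y U V))"
proof -
  let ?X = "prod_topology T (prod_topology T T)"
  have c1: "continuous_map ?X T (\<lambda>p. fst p)" by (rule continuous_map_fst)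
  have c2: "continuous_map ?X T (\<lambda>p. fst (snd p))"
    using continuous_map_compose[OF continuous_map_snd continuous_map_fst] by (simp add: o_def)
  have c3: "continuous_map ?X T (\<lambda>p. snd (snd p))"
    using continuous_map_compose[OF continuous_map_snd continuous_map_snd] by (simp add: o_def)
  have c4: "continuous_map ?X T (\<lambda>p. f (fst (snd p)))"
    using continuous_map_compose[OF c2 fcont] by (simp add: o_def)
  have Uo: "openin T U" using assms nb_def by auto
  define S where "S = {p \<in> topspace ?X. inv (fst p) \<otimes> fst (snd p) \<otimes> fst p \<otimes> snd (snd p) \<in> U}
     \<inter> {p \<in> topspace ?X. fst p \<otimes> inv (fst (snd p)) \<otimes> inv (fst p) \<in> U}
     \<inter> {p \<in> topspace ?X. fst (snd p) \<otimes> snd (snd p) \<in> U}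
     \<inter> {p \<in> topspace ?X. inv (fst (snd p)) \<otimes> snd (snd p) \<in> U}
     \<inter> {p \<in> topspace ?X. fst (snd p) \<otimes> inv (snd (snd p)) \<in> U}
     \<inter> {p \<in> topspace ?X. f (fst (snd p)) \<in> U}"
  have So: "openin ?X S"
    unfolding S_def
    by (intro openin_Int openin_continuous_map_preimage[OF _ Uo] cont_mul cont_inv c1 c2 c3 c4)
  have "(y,(\<one>,\<one>)) \<in> S"
    using assms unfolding S_def nb_def by (simp add: top f1)
  then obtain O1 W where O1: "openin T O1" "openin (prod_topology T T) W" "y \<in> O1" "(\<one>,\<one>) \<in> W" "O1 \<times> W \<subseteq> S"
    using So openin_prod_topology_alt[of T "prod_topology T T" S] by blast
  then obtain V1 V2 where V: "openin T V1" "openin T V2" "\<one> \<in> V1" "\<one> \<in> V2" "V1 \<times> V2 \<subseteq> W"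
    using openin_prod_topology_alt[of T T W] by blast
  obtain A where A: "A \<in> N" "y \<in> A" "A \<subseteq> O1"
    using net O1 unfolding is_network_def by blast
  have "nb (V1 \<inter> V2)" using V by (auto simp: nb_def)
  moreover have "\<forall>y\<in>A. good y U (V1 \<inter> V2)"
  proof (intro ballI, unfold good_def, intro ballI)
    fix y' a b assume "y' \<in> A" "a \<in> V1 \<inter> V2" "b \<in> V1 \<inter> V2"
    then have "(y',(a,b)) \<in> S" using A O1 V by blast
    then show "inv y' \<otimes> a \<otimes> y' \<otimes> b \<in> U \<and>
   y' \<otimes> inv a \<otimes> inv y' \<in> U \<and> a \<otimes> b \<in> U \<and> inv a \<otimes> b \<in> U \<and> a \<otimes> inv b \<in> U \<and> f a \<in> U"
      unfolding S_def by simp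
  qed
  ultimately show ?thesis using A by blast
qed

lemma nb_chc: assumes "nb U" shows "nb (chc A U)"
proof (cases "\<exists>V. nb V \<and> (\<forall>y\<in>A. good y U V)")
  case True then show ?thesis unfolding chc_def using someI_ex[OF True] by simp
next
  case False then show ?thesis unfolding chc_def if_not_P[OF False] using assms by simp
qed

lemma good_chc: assumes "\<exists>V. nb V \<and> (\<forall>y\<in>A. good y U V)" "y \<in> A" shows "good y U (chc A U)"
  unfolding chc_def using someI_ex[OF assms(1)] assms by simp

lemma nb_sepc: "nb (sepc A)"
proof (cases "\<exists>V. nb V \<and> V \<inter> A = {}")
  case True then show ?thesis unfolding sepc_def using someI_ex[OF True] by simp
next
  case False then show ?thesis unfolding sepc_def if_not_P[OF False] using U0o U01 by (simp add: nb_def)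
qed

lemma sepc_disj: assumes "\<exists>V. nb V \<and> V \<inter> A = {}" shows "sepc A \<inter> A = {}"
  unfolding sepc_def using someI_ex[OF assms] assms by simp

lemma nb_Int: "nb U \<Longrightarrow> nb V \<Longrightarrow> nb (U \<inter> V)"
  by (auto simp: nb_def)

lemma iter_nb: "U \<in> (stepc ^^ n) F0 \<Longrightarrow> nb U"
proof (induction n arbitrary: U)
  case 0
  then show ?case using U0o U01 nb_sepc by (auto simp: F0_def nb_def)
next
  case (Suc n)
  then show ?case by (auto simp: stepc_def intro: nb_Int nb_chc)
qed

lemma Us_nb: "U \<in> Us \<Longrightarrow> nb U"
  unfolding Us_def using iter_nb by blast

lemma iter_mono: "(stepc ^^ m) F0 \<subseteq> (stepc ^^ (m + k)) F0"
  by (induction k) (auto simp: stepc_def)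

lemma iter_mono': "m \<le> n \<Longrightarrow> (stepc ^^ m) F0 \<subseteq> (stepc ^^ n) F0"
  using iter_mono[of m "n - m"] by simp

lemma Us_Int: assumes "U \<in> Us" "V \<in> Us" shows "U \<inter> V \<in> Us"
proof -
  obtain m n where "U \<in> (stepc ^^ m) F0" "V \<in> (stepc ^^ n) F0" using assms Us_def by blast
  then have "U \<in> (stepc ^^ max m n) F0" "V \<in> (stepc ^^ max m n) F0"
    using iter_mono'[of m "max m n"] iter_mono'[of n "max m n"] by auto
  then have "U \<inter> V \<in> (stepc ^^ Suc (max m n)) F0" by (auto simp: stepc_def)
  then show ?thesis unfolding Us_def by blast
qed

lemma Us_chc: assumes "A \<in> N" "U \<in> Us" shows "chc A U \<in> Us"
proof -
  obtain m where "U \<in> (stepc ^^ m) F0" using assms Us_def by blast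
  then have "chc A U \<in> (stepc ^^ Suc m) F0" using assms by (auto simp: stepc_def)
  then show ?thesis unfolding Us_def by blast
qed

lemma Us_good: assumes "U \<in> Us" "y \<in> carrier G" shows "\<exists>V\<in>Us. good y U V"
proof -
  obtain A where A: "A \<in> N" "y \<in> A" "\<exists>V. nb V \<and> (\<forall>y\<in>A. good y U V)"
    using exist_good[OF Us_nb[OF assms(1)] assms(2)] by blast
  show ?thesis using Us_chc[OF A(1) assms(1)] good_chc[OF A(3) A(2)] by blast
qed

lemma F0_Us: "F0 \<subseteq> Us"
  unfolding Us_def by (metis UN_upper UNIV_I funpow_0)

lemma U0_Us: "U0 \<in> Us"
  using F0_Us F0_def by auto

lemma Us_sep: assumes "z \<in> carrier G" "z \<noteq> \<one>" shows "\<exists>U\<in>Us. z \<notin> U"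
proof -
  obtain P Q where PQ: "openin T P" "openin T Q" "\<one> \<in> P" "z \<in> Q" "disjnt P Q"
    using haus assms unfolding Hausdorff_space_def by (metis one_closed top)
  obtain A where A: "A \<in> N" "z \<in> A" "A \<subseteq> Q"
    using net PQ unfolding is_network_def by blast
  have "\<exists>V. nb V \<and> V \<inter> A = {}" using PQ A by (auto simp: nb_def disjnt_def)
  then have "sepc A \<inter> A = {}" by (rule sepc_disj)
  moreover have "sepc A \<in> Us" using F0_Us A by (auto simp: F0_def)
  ultimately show ?thesis using A by blast
qed

lemma card_step: assumes "|F| \<le>o |N|" shows "|stepc F| \<le>o |N|"
proof -
  have fin: "\<not> finite (Field (card_of N))" using infN by (simp add: Field_card_of)
  have co: "Card_order |N|" by (rule card_of_Card_order)
  have "card_of (F \<times> F) \<le>o |N|" using card_of_Sigma_ordLeq_infinite[OF infN assms, of "\<lambda>_. F"] assms by auto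
  then have 1: "card_of ((\<lambda>(U,U'). U \<inter> U') ` (F \<times> F)) \<le>o |N|" using card_of_image ordLeq_transitive by blast
  have "card_of (N \<times> F) \<le>o |N|" using card_of_Sigma_ordLeq_infinite[OF infN, of N "\<lambda>_. F"] assms
    by (auto simp: ordLeq_refl card_of_Card_order)
  then have 2: "card_of ((\<lambda>(A,U). chc A U) ` (N \<times> F)) \<le>o |N|" using card_of_image ordLeq_transitive by blast
  show ?thesis unfolding stepc_def
    by (intro card_of_Un_ordLeq_infinite_Field[OF fin _ _ co] assms 1 2)
qed

lemma card_iter: "|(stepc ^^ n) F0| \<le>o |N|"
proof (induction n)
  case 0
  have fin: "\<not> finite (Field (card_of N))" using infN by (simp add: Field_card_of)
  have "N \<noteq> {}" using infN by auto
  then have "|{U0}| \<le>o |N|" by (rule card_of_singl_ordLeq)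
  moreover have "|sepc ` N| \<le>o |N|" by (rule card_of_image)
  ultimately show ?case unfolding F0_def
    using card_of_Un_ordLeq_infinite_Field[OF fin _ _ card_of_Card_order, of "{U0}" "sepc ` N"] by simp
next
  case (Suc n)
  then show ?case using card_step by simp
qed

lemma card_Us: "|Us| \<le>o |N|"
  unfolding Us_def
  by (rule card_of_UNION_ordLeq_infinite[OF infN]) (use infN infinite_iff_card_of_nat card_iter in auto)


end

context constr begin
definition lt where "lt x U = (\<lambda>u. x \<otimes> u) ` U"
definition opn where "opn W \<longleftrightarrow> W \<subseteq> carrier G \<and> (\<forall>x\<in>W. \<exists>U\<in>Us. lt x U \<subseteq> W)"
definition T' where "T' = topology opn"
definition intr where "intr x U = {z \<in> carrier G. \<exists>V\<in>Us. lt z V \<subseteq> lt x U}"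

lemma istop: "istopology opn"
  unfolding istopology_def
proof (intro conjI allI impI)
  fix S S' assume S: "opn S" and S': "opn S'"
  show "opn (S \<inter> S')" unfolding opn_def
  proof (intro conjI ballI)
    show "S \<inter> S' \<subseteq> carrier G" using S unfolding opn_def by blast
    fix x assume x: "x \<in> S \<inter> S'"
    obtain U where U: "U \<in> Us" "lt x U \<subseteq> S" using S x unfolding opn_def by blast
    obtain U' where U': "U' \<in> Us" "lt x U' \<subseteq> S'" using S' x unfolding opn_def by blast
    have "lt x (U \<inter> U') \<subseteq> S \<inter> S'" using U U' unfolding lt_def by blast
    then show "\<exists>U\<in>Us. lt x U \<subseteq> S \<inter> S'" using Us_Int[OF U(1) U'(1)] by blast
  qed
next
  fix KK assume K: "\<forall>K\<in>KK. opn K"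
  show "opn (\<Union>KK)" unfolding opn_def
  proof (intro conjI ballI)
    show "\<Union>KK \<subseteq> carrier G" using K unfolding opn_def by blast
    fix x assume "x \<in> \<Union>KK"
    then obtain S where S: "S \<in> KK" "x \<in> S" by blast
    then obtain U where "U \<in> Us" "lt x U \<subseteq> S" using K unfolding opn_def by blast
    then show "\<exists>U\<in>Us. lt x U \<subseteq> \<Union>KK" using S by blast
  qed
qed

lemma openT': "openin T' W \<longleftrightarrow> opn W"
  unfolding T'_def using istop by simp

lemma lt_mem: assumes "x \<in> carrier G" "U \<in> Us" shows "x \<in> lt x U"
proof -
  have "\<one> \<in> U" using Us_nb[OF assms(2)] nb_def by simp
  moreover have "x = x \<otimes> \<one>" using assms(1) by simp
  ultimately show ?thesis unfolding lt_def by (rule rev_image_eqI)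
qed

lemma lt_sub: "x \<in> carrier G \<Longrightarrow> U \<in> Us \<Longrightarrow> lt x U \<subseteq> carrier G"
  using Us_nb[of U] nb_sub[of U] unfolding lt_def by auto

lemma int_mem: "x \<in> carrier G \<Longrightarrow> U \<in> Us \<Longrightarrow> x \<in> intr x U"
  unfolding intr_def by blast

lemma int_sub: "intr x U \<subseteq> lt x U"
proof
  fix z assume "z \<in> intr x U"
  then obtain V where "z \<in> carrier G" "V \<in> Us" "lt z V \<subseteq> lt x U" unfolding intr_def by blast
  then show "z \<in> lt x U" using lt_mem[of z V] by blast
qed

lemma good1: "good \<one> U V \<Longrightarrow> a \<in> V \<Longrightarrow> b \<in> V \<Longrightarrow> a \<otimes> b \<in> U \<and> inv a \<otimes> b \<in> U \<and> a \<otimes> inv b \<in> U \<and> f a \<in> U"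
  unfolding good_def by blast

lemma int_open: assumes "x \<in> carrier G" "U \<in> Us" shows "openin T' (intr x U)"
proof -
  have "opn (intr x U)"
    unfolding opn_def
  proof (intro conjI ballI)
    show "intr x U \<subseteq> carrier G" unfolding intr_def by blast
    fix z assume z: "z \<in> intr x U"
    then obtain V where V: "V \<in> Us" "lt z V \<subseteq> lt x U" and zc: "z \<in> carrier G" unfolding intr_def by blast
    obtain V' where V': "V' \<in> Us" "good \<one> V V'" using Us_good[OF V(1)] by blast
    have Vc': "V' \<subseteq> carrier G" using Us_nb[OF V'(1)] by (rule nb_sub)
    have "lt z V' \<subseteq> intr x U"
    proof
      fix w assume "w \<in> lt z V'"
      then obtain a where a: "a \<in> V'" "w = z \<otimes> a" unfolding lt_def by blast
      have ac: "a \<in> carrier G" using a(1) Vc' by blast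
      have "lt w V' \<subseteq> lt z V"
      proof
        fix t assume "t \<in> lt w V'"
        then obtain b where b: "b \<in> V'" "t = w \<otimes> b" unfolding lt_def by blast
        have bc: "b \<in> carrier G" using b(1) Vc' by blast
        have "t = z \<otimes> a \<otimes> b" by (simp only: b(2) a(2))
        also have "\<dots> = z \<otimes> (a \<otimes> b)" by (rule m_assoc[OF zc ac bc])
        finally have "t = z \<otimes> (a \<otimes> b)" .
        moreover have "a \<otimes> b \<in> V" using good1[OF V'(2) a(1) b(1)] by blast
        ultimately show "t \<in> lt z V" unfolding lt_def by blast
      qed
      then have "lt w V' \<subseteq> lt x U" using V(2) by (rule order_trans)
      moreover have "w \<in> carrier G" unfolding a(2) using zc ac by (rule m_closed)
      ultimately show "w \<in> intr x U" unfolding intr_def using V'(1) by blast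
    qed
    then show "\<exists>U'\<in>Us. lt z U' \<subseteq> intr x U" using V'(1) by blast
  qed
  then show ?thesis unfolding openT' .
qed

lemma opn_T: assumes "openin T' W" shows "openin T W"
proof -
  have o: "opn W" using assms unfolding openT' .
  show ?thesis
  proof (subst openin_subopen, intro ballI)
    fix x assume x: "x \<in> W"
    then obtain U where U: "U \<in> Us" "lt x U \<subseteq> W" using o unfolding opn_def by blast
    have xc: "x \<in> carrier G" using o x unfolding opn_def by blast
    have "openin T U" using Us_nb[OF U(1)] unfolding nb_def by blast
    then have "openin T (lt x U)" unfolding lt_def using lt_open[of U x] xc by blast
    then show "\<exists>T0. openin T T0 \<and> x \<in> T0 \<and> T0 \<subseteq> W"
      using U(2) lt_mem[OF xc U(1)] by blast
  qed
qed

lemma carrier_open: "openin T' (carrier G)"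
  unfolding openT' opn_def
proof (intro conjI ballI)
  fix x assume "x \<in> carrier G"
  then show "\<exists>U\<in>Us. lt x U \<subseteq> carrier G" using U0_Us lt_sub[of x U0] by blast
qed simp

lemma topT': "topspace T' = carrier G"
proof
  have "opn (topspace T')" using openin_topspace[of T'] unfolding openT' .
  then show "topspace T' \<subseteq> carrier G" unfolding opn_def by blast
  show "carrier G \<subseteq> topspace T'" using carrier_open openin_subset by blast
qed

lemma opn_get: "openin T' W \<Longrightarrow> x \<in> W \<Longrightarrow> \<exists>U\<in>Us. lt x U \<subseteq> W"
  unfolding openT' opn_def by blast

lemma opn_sub: "openin T' W \<Longrightarrow> W \<subseteq> carrier G"
  unfolding openT' opn_def by blast

lemma algA: "x \<in> carrier G \<Longrightarrow> y \<in> carrier G \<Longrightarrow> a \<in> carrier G \<Longrightarrow> b \<in> carrier G \<Longrightarrow>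
   x \<otimes> a \<otimes> (y \<otimes> b) = x \<otimes> y \<otimes> (inv y \<otimes> a \<otimes> y \<otimes> b)"
  by (simp add: m_assoc)
lemma algB: "x \<in> carrier G \<Longrightarrow> a \<in> carrier G \<Longrightarrow> 
   inv (x \<otimes> a) = inv x \<otimes> (x \<otimes> inv a \<otimes> inv x)"
  by (simp add: m_assoc inv_mult_group)

lemma mult_cont: "continuous_map (prod_topology T' T') T' (\<lambda>(x,y). x \<otimes> y)"
  unfolding continuous_map_def
proof (intro conjI allI impI)
  show "(\<lambda>(x, y). x \<otimes> y) \<in> topspace (prod_topology T' T') \<rightarrow> topspace T'"
    by (auto simp: topT')
  fix W assume W: "openin T' W"
  define P where "P = {p \<in> topspace (prod_topology T' T'). (case p of (x, y) \<Rightarrow> x \<otimes> y) \<in> W}"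
  have "openin (prod_topology T' T') P"
    unfolding openin_prod_topology_alt
  proof (intro allI impI)
    fix x y assume "(x,y) \<in> P"
    then have xy: "x \<in> carrier G" "y \<in> carrier G" "x \<otimes> y \<in> W" by (auto simp: topT' P_def)
    obtain U where U: "U \<in> Us" "lt (x \<otimes> y) U \<subseteq> W" using opn_get[OF W xy(3)] by blast
    obtain V where V: "V \<in> Us" "good y U V" using Us_good[OF U(1) xy(2)] by blast
    have Vc: "V \<subseteq> carrier G" using Us_nb[OF V(1)] by (rule nb_sub)
    have "intr x V \<times> intr y V \<subseteq> P"
    proof
      fix p assume p: "p \<in> intr x V \<times> intr y V"
      obtain x' y' where pxy: "p = (x', y')" by (cases p)
      have a: "x' \<in> intr x V" "y' \<in> intr y V" using p pxy by auto
      have xyc: "x' \<in> carrier G" "y' \<in> carrier G" using a unfolding intr_def by auto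
      have "x' \<in> lt x V" "y' \<in> lt y V" using a int_sub by auto
      then obtain a b where ab: "a \<in> V" "b \<in> V" "x' = x \<otimes> a" "y' = y \<otimes> b" unfolding lt_def by blast
      have abc: "a \<in> carrier G" "b \<in> carrier G" using ab(1,2) Vc by auto
      have "x' \<otimes> y' = x \<otimes> y \<otimes> (inv y \<otimes> a \<otimes> y \<otimes> b)" unfolding ab(3,4) using algA[OF xy(1,2) abc] .
      moreover have "inv y \<otimes> a \<otimes> y \<otimes> b \<in> U" using V(2) ab unfolding good_def by blast
      ultimately have "x' \<otimes> y' \<in> lt (x \<otimes> y) U" unfolding lt_def by blast
      then have "x' \<otimes> y' \<in> W" using U(2) by blast
      then show "p \<in> P" unfolding P_def pxy using xyc by (simp add: topT')
    qed
    moreover have "openin T' (intr x V)" "openin T' (intr y V)" using int_open xy V by auto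
    moreover have "x \<in> intr x V" "y \<in> intr y V" using int_mem xy V by auto
    ultimately show "\<exists>U V. openin T' U \<and> openin T' V \<and> x \<in> U \<and> y \<in> V \<and> U \<times> V \<subseteq> P"
      by blast
  qed
  then show "openin (prod_topology T' T') {p \<in> topspace (prod_topology T' T'). (case p of (x, y) \<Rightarrow> x \<otimes> y) \<in> W}"
    unfolding P_def .
qed

lemma open_crit: assumes "\<And>x. x \<in> S \<Longrightarrow> x \<in> carrier G \<and> (\<exists>V\<in>Us. intr x V \<subseteq> S)"
  shows "openin T' S"
proof (subst openin_subopen, intro ballI)
  fix x assume "x \<in> S"
  then obtain V where V: "x \<in> carrier G" "V \<in> Us" "intr x V \<subseteq> S" using assms by blast
  have "openin T' (intr x V)" using int_open[OF V(1,2)] .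
  moreover have "x \<in> intr x V" using int_mem[OF V(1,2)] .
  ultimately show "\<exists>T0. openin T' T0 \<and> x \<in> T0 \<and> T0 \<subseteq> S" using V(3) by blast
qed

lemma inv_cont: "continuous_map T' T' (\<lambda>x. inv x)"
  unfolding continuous_map_def
proof (intro conjI allI impI)
  show "(\<lambda>x. inv x) \<in> topspace T' \<rightarrow> topspace T'" by (auto simp: topT')
  fix W assume W: "openin T' W"
  show "openin T' {x \<in> topspace T'. inv x \<in> W}"
  proof (rule open_crit)
    fix x assume "x \<in> {x \<in> topspace T'. inv x \<in> W}"
    then have x: "x \<in> carrier G" "inv x \<in> W" by (auto simp: topT')
    obtain U where U: "U \<in> Us" "lt (inv x) U \<subseteq> W" using opn_get[OF W x(2)] by blast
    obtain V where V: "V \<in> Us" "good x U V" using Us_good[OF U(1) x(1)] by blast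
    have Vc: "V \<subseteq> carrier G" using Us_nb[OF V(1)] by (rule nb_sub)
    have "intr x V \<subseteq> {x \<in> topspace T'. inv x \<in> W}"
    proof
      fix x' assume a: "x' \<in> intr x V"
      have xc': "x' \<in> carrier G" using a unfolding intr_def by auto
      have "x' \<in> lt x V" using a int_sub by auto
      then obtain a where ab: "a \<in> V" "x' = x \<otimes> a" unfolding lt_def by blast
      have abc: "a \<in> carrier G" using ab(1) Vc by auto
      have "inv x' = inv x \<otimes> (x \<otimes> inv a \<otimes> inv x)" unfolding ab(2) using algB[OF x(1) abc] .
      moreover have "x \<otimes> inv a \<otimes> inv x \<in> U" using V(2) ab(1) unfolding good_def by blast
      ultimately have "inv x' \<in> lt (inv x) U" unfolding lt_def by blast
      then have "inv x' \<in> W" using U(2) by blast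
      then show "x' \<in> {x \<in> topspace T'. inv x \<in> W}" using xc' by (simp add: topT')
    qed
    then show "x \<in> carrier G \<and> (\<exists>V\<in>Us. intr x V \<subseteq> {x \<in> topspace T'. inv x \<in> W})"
      using x(1) V(1) by blast
  qed
qed

lemma f_cont: "continuous_map T' T' f"
  unfolding continuous_map_def
proof (intro conjI allI impI)
  show "f \<in> topspace T' \<rightarrow> topspace T'" by (auto simp: topT' fcar)
  fix W assume W: "openin T' W"
  show "openin T' {x \<in> topspace T'. f x \<in> W}"
  proof (rule open_crit)
    fix x assume "x \<in> {x \<in> topspace T'. f x \<in> W}"
    then have x: "x \<in> carrier G" "f x \<in> W" by (auto simp: topT')
    obtain U where U: "U \<in> Us" "lt (f x) U \<subseteq> W" using opn_get[OF W x(2)] by blast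
    obtain V where V: "V \<in> Us" "good \<one> U V" using Us_good[OF U(1)] by blast
    have Vc: "V \<subseteq> carrier G" using Us_nb[OF V(1)] by (rule nb_sub)
    have "intr x V \<subseteq> {x \<in> topspace T'. f x \<in> W}"
    proof
      fix x' assume a: "x' \<in> intr x V"
      have xc': "x' \<in> carrier G" using a unfolding intr_def by auto
      have "x' \<in> lt x V" using a int_sub by auto
      then obtain a where ab: "a \<in> V" "x' = x \<otimes> a" unfolding lt_def by blast
      have abc: "a \<in> carrier G" using ab(1) Vc by auto
      have "f x' = f x \<otimes> f a" unfolding ab(2) using hom_mult[OF fhom x(1) abc] .
      moreover have "f a \<in> U" using V(2) ab(1) unfolding good_def by blast
      ultimately have "f x' \<in> lt (f x) U" unfolding lt_def by blast
      then have "f x' \<in> W" using U(2) by blast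
      then show "x' \<in> {x \<in> topspace T'. f x \<in> W}" using xc' by (simp add: topT')
    qed
    then show "x \<in> carrier G \<and> (\<exists>V\<in>Us. intr x V \<subseteq> {x \<in> topspace T'. f x \<in> W})"
      using x(1) V(1) by blast
  qed
qed

lemma algC: assumes "x \<in> carrier G" "y \<in> carrier G" "a \<in> carrier G" "b \<in> carrier G" "x \<otimes> a = y \<otimes> b"
  shows "inv x \<otimes> y = a \<otimes> inv b"
proof -
  have "y = y \<otimes> b \<otimes> inv b" using assms by (simp add: m_assoc)
  also have "\<dots> = x \<otimes> a \<otimes> inv b" using assms(5) by simp
  finally have "inv x \<otimes> y = inv x \<otimes> (x \<otimes> a \<otimes> inv b)" by simp
  then show ?thesis using assms(1-4) by (simp add: m_assoc)
qed

lemma haus': "Hausdorff_space T'"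
  unfolding Hausdorff_space_def topT'
proof (intro allI impI, elim conjE)
  fix x y assume xy: "x \<in> carrier G" "y \<in> carrier G" "x \<noteq> y"
  have "inv x \<otimes> y \<noteq> \<one>"
  proof
    assume "inv x \<otimes> y = \<one>"
    then have "x \<otimes> (inv x \<otimes> y) = x" using xy by simp
    then show False using xy by simp
  qed
  then obtain U where U: "U \<in> Us" "inv x \<otimes> y \<notin> U" using Us_sep xy by blast
  obtain V where V: "V \<in> Us" "good \<one> U V" using Us_good[OF U(1)] by blast
  have Vc: "V \<subseteq> carrier G" using V Us_nb nb_sub by auto
  have "disjnt (intr x V) (intr y V)"
  proof (rule ccontr)
    assume "\<not> disjnt (intr x V) (intr y V)"
    then obtain z where "z \<in> lt x V" "z \<in> lt y V" using int_sub unfolding disjnt_def by blast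
    then obtain a b where ab: "a \<in> V" "b \<in> V" "x \<otimes> a = y \<otimes> b" unfolding lt_def by auto
    have abc: "a \<in> carrier G" "b \<in> carrier G" using ab(1,2) Vc by auto
    have "inv x \<otimes> y = a \<otimes> inv b" using algC[OF xy(1,2) abc ab(3)] .
    moreover have "a \<otimes> inv b \<in> U" using good1[OF V(2) ab(1,2)] by blast
    ultimately show False using U by simp
  qed
  moreover have "openin T' (intr x V)" "openin T' (intr y V)" using int_open xy V(1) by auto
  moreover have "x \<in> intr x V" "y \<in> intr y V" using int_mem xy V(1) by auto
  ultimately show "\<exists>U V. openin T' U \<and> openin T' V \<and> x \<in> U \<and> y \<in> V \<and> disjnt U V"
    by blast
qed

lemma not_open: "\<not> open_map T' T' f"
proof
  assume om: "open_map T' T' f"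
  let ?W = "intr \<one> U0"
  have "openin T' ?W" using int_open U0_Us by simp
  then have "openin T' (f ` ?W)" using om unfolding open_map_def by blast
  then have "openin T (f ` ?W)" by (rule opn_T)
  moreover have "\<one> \<in> f ` ?W" using int_mem[of \<one> U0] U0_Us f1 by force
  moreover have "?W \<subseteq> U0"
  proof
    fix w assume "w \<in> ?W"
    then have "w \<in> lt \<one> U0" using int_sub by blast
    then obtain u where u: "u \<in> U0" "w = \<one> \<otimes> u" unfolding lt_def by blast
    have "u \<in> carrier G" using u(1) openin_subset[OF U0o] top by blast
    then show "w \<in> U0" using u by simp
  qed
  ultimately show False using U0bad by blast
qed

definition D where "D = (\<lambda>A. SOME x. x \<in> A) ` {A \<in> N. A \<noteq> {}}"

lemma D_dense: assumes "openin T S" "x \<in> S" shows "\<exists>d\<in>D. d \<in> S"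
proof -
  obtain A where A: "A \<in> N" "x \<in> A" "A \<subseteq> S" using net assms unfolding is_network_def by blast
  then have "(SOME x. x \<in> A) \<in> A" by (meson someI)
  then show ?thesis using A unfolding D_def by blast
qed

lemma D_car: "D \<subseteq> carrier G"
proof
  fix d assume "d \<in> D"
  then obtain A where A: "A \<in> N" "A \<noteq> {}" "d = (SOME x. x \<in> A)" unfolding D_def by blast
  then have "d \<in> A" by (metis ex_in_conv someI)
  then show "d \<in> carrier G" using A net top unfolding is_network_def by blast
qed

lemma card_D: "|D| \<le>o |N|"
  unfolding D_def using card_of_image card_of_mono1[of "{A \<in> N. A \<noteq> {}}" N] ordLeq_transitive by blast

definition B where "B = (\<lambda>(d,V). intr d V) ` (D \<times> Us)"

lemma card_B: "|B| \<le>o |N|"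
proof -
  have "card_of (D \<times> Us) \<le>o |N|"
    using card_of_Sigma_ordLeq_infinite[OF infN card_D, of "\<lambda>_. Us"] card_Us by auto
  then show ?thesis unfolding B_def using card_of_image ordLeq_transitive by blast
qed

lemma base: "is_base T' B"
  unfolding is_base_def
proof (intro conjI ballI allI impI)
  fix V assume "V \<in> B"
  then obtain d V' where "d \<in> D" "V' \<in> Us" "V = intr d V'" unfolding B_def by blast
  then show "openin T' V" using int_open D_car by auto
next
  fix W assume W: "openin T' W"
  have "W \<subseteq> \<Union>{b \<in> B. b \<subseteq> W}"
  proof
    fix x assume x: "x \<in> W"
    have xc: "x \<in> carrier G" using opn_sub[OF W] x by blast
    obtain U where U: "U \<in> Us" "lt x U \<subseteq> W" using opn_get[OF W x] by blast
    obtain V where V: "V \<in> Us" "good \<one> U V" using Us_good[OF U(1)] by blast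
    obtain V2 where V2: "V2 \<in> Us" "good \<one> V V2" using Us_good[OF V(1)] by blast
    have Vc: "V \<subseteq> carrier G" using Us_nb[OF V(1)] by (rule nb_sub)
    have Vc2: "V2 \<subseteq> carrier G" using Us_nb[OF V2(1)] by (rule nb_sub)
    have "openin T (intr x V2)" using opn_T[OF int_open[OF xc V2(1)]] .
    then obtain d where d: "d \<in> D" "d \<in> intr x V2" using D_dense int_mem[OF xc V2(1)] by blast
    then have "d \<in> lt x V2" using int_sub by blast
    then obtain v2 where v2: "v2 \<in> V2" "d = x \<otimes> v2" unfolding lt_def by blast
    have v2c: "v2 \<in> carrier G" using v2(1) Vc2 by blast
    have "lt x V2 \<subseteq> lt d V"
    proof
      fix t assume "t \<in> lt x V2"
      then obtain c where c: "c \<in> V2" "t = x \<otimes> c" unfolding lt_def by blast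
      have cc: "c \<in> carrier G" using c(1) Vc2 by blast
      have "t = d \<otimes> (inv v2 \<otimes> c)" unfolding c(2) v2(2) using xc v2c cc by (simp add: m_assoc)
      moreover have "inv v2 \<otimes> c \<in> V" using good1[OF V2(2) v2(1) c(1)] by blast
      ultimately show "t \<in> lt d V" unfolding lt_def by blast
    qed
    then have "x \<in> intr d V" unfolding intr_def using xc V2(1) by blast
    moreover have "intr d V \<subseteq> W"
    proof
      fix t assume "t \<in> intr d V"
      then have "t \<in> lt d V" using int_sub by blast
      then obtain a where a: "a \<in> V" "t = d \<otimes> a" unfolding lt_def by blast
      have ac: "a \<in> carrier G" using a(1) Vc by blast
      have one: "\<one> \<in> V2" using Us_nb[OF V2(1)] unfolding nb_def by blast
      have "v2 \<otimes> \<one> \<in> V" using good1[OF V2(2) v2(1) one] by blast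
      then have v2V: "v2 \<in> V" using v2c by simp
      have "t = x \<otimes> (v2 \<otimes> a)" unfolding a(2) v2(2) using xc v2c ac by (simp add: m_assoc)
      moreover have "v2 \<otimes> a \<in> U" using good1[OF V(2) v2V a(1)] by blast
      ultimately have "t \<in> lt x U" unfolding lt_def by blast
      then show "t \<in> W" using U(2) by blast
    qed
    moreover have "intr d V \<in> B" unfolding B_def using d(1) V(1) by blast
    ultimately show "x \<in> \<Union>{b \<in> B. b \<subseteq> W}" by blast
  qed
  then have "\<Union>{b \<in> B. b \<subseteq> W} = W" by blast
  then show "\<exists>\<F>\<subseteq>B. \<Union>\<F> = W" by (intro exI[of _ "{b \<in> B. b \<subseteq> W}"]) blast
qed

lemma result: "\<exists>T'. hausdorff_group_topology G T' \<and> (\<exists>B'. is_base T' B' \<and> (card_of B', card_of N) \<in> ordLeq)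
   \<and> \<not> g_reversible G T'"
proof (rule exI[of _ T'], intro conjI)
  have "topological_group G T'"
    unfolding topological_group_def
    using is_group topT' mult_cont inv_cont by (intro conjI)
  then show "hausdorff_group_topology G T'"
    unfolding hausdorff_group_topology_def using haus' by (intro conjI)
  show "\<exists>B'. is_base T' B' \<and> (card_of B', card_of N) \<in> ordLeq" using base card_B by (intro exI conjI)
  show "\<not> g_reversible G T'" unfolding g_reversible_def 
  proof
    assume "\<forall>f. f \<in> iso G G \<and> continuous_map T' T' f \<longrightarrow> open_map T' T' f"
    then have "open_map T' T' f" using fiso f_cont by simp
    then show False using not_open by simp
  qed
qed

end

context tgrp begin

lemma U0_exists:
  assumes fh: "f \<in> hom G G" and fc: "continuous_map T T f" and no: "\<not> open_map T T f"
  shows "\<exists>U0. openin T U0 \<and> \<one> \<in> U0 \<and> \<not> (\<exists>W. openin T W \<and> \<one> \<in> W \<and> W \<subseteq> f ` U0)"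
proof (rule ccontr)
  assume "\<not> ?thesis"
  then have H: "\<And>U. openin T U \<Longrightarrow> \<one> \<in> U \<Longrightarrow> \<exists>W. openin T W \<and> \<one> \<in> W \<and> W \<subseteq> f ` U" by blast
  have "open_map T T f"
    unfolding open_map_def
  proof (intro allI impI)
    fix O1 assume O1: "openin T O1"
    have Oc: "O1 \<subseteq> carrier G" using openin_subset[OF O1] top by blast
    show "openin T (f ` O1)"
    proof (subst openin_subopen, intro ballI)
      fix z assume "z \<in> f ` O1"
      then obtain x where x: "x \<in> O1" "z = f x" by blast
      have xc: "x \<in> carrier G" using x Oc by blast
      have fxc: "f x \<in> carrier G" using fh xc by (auto simp: hom_def)
      let ?U = "(\<lambda>y. inv x \<otimes> y) ` O1"
      have Uo: "openin T ?U" using lt_open[OF O1] xc by simp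
      have "\<one> = inv x \<otimes> x" using xc by simp
      then have U1: "\<one> \<in> ?U" using x(1) by blast
      obtain W where W: "openin T W" "\<one> \<in> W" "W \<subseteq> f ` ?U" using H[OF Uo U1] by blast
      let ?T0 = "(\<lambda>y. f x \<otimes> y) ` W"
      have "openin T ?T0" using lt_open[OF W(1) fxc] .
      moreover have "z \<in> ?T0"
      proof -
        have "z = f x \<otimes> \<one>" using x(2) fxc by simp
        then show ?thesis using W(2) by blast
      qed
      moreover have "?T0 \<subseteq> f ` O1"
      proof
        fix t assume "t \<in> ?T0"
        then obtain w where w: "w \<in> W" "t = f x \<otimes> w" by blast
        then obtain o1 where o1: "o1 \<in> O1" "w = f (inv x \<otimes> o1)" using W(3) by blast
        have oc: "o1 \<in> carrier G" using o1(1) Oc by blast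
        have "t = f x \<otimes> f (inv x \<otimes> o1)" using w o1 by simp
        also have "\<dots> = f (x \<otimes> (inv x \<otimes> o1))" using hom_mult[OF fh xc, of "inv x \<otimes> o1"] xc oc by simp
        also have "\<dots> = f o1" using xc oc by simp
        finally show "t \<in> f ` O1" using o1(1) by blast
      qed
      ultimately show "\<exists>T0. openin T T0 \<and> z \<in> T0 \<and> T0 \<subseteq> f ` O1" by blast
    qed
  qed
  then show False using no by blast
qed

end

theorem theorem6p4:
  fixes G :: "('a, 'b) monoid_scheme" and T :: "'a topology"
  assumes "hausdorff_group_topology G T"
    and "\<not> g_reversible G T"
  shows "\<exists>T'. hausdorff_group_topology G T' \<and> weight_le_netweight T' T
              \<and> \<not> g_reversible G T'"
proof -
  have grp: "group G" and top: "topspace T = carrier G"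
    and mc: "continuous_map (prod_topology T T) T (\<lambda>(x, y). x \<otimes>\<^bsub>G\<^esub> y)"
    and ic: "continuous_map T T (\<lambda>x. inv\<^bsub>G\<^esub> x)" and haus: "Hausdorff_space T"
    using assms(1) unfolding hausdorff_group_topology_def topological_group_def by auto
  interpret tg: tgrp G T using grp top mc ic by (simp add: tgrp_def tgrp_axioms_def)
  obtain f where f: "f \<in> iso G G" "continuous_map T T f" "\<not> open_map T T f"
    using assms(2) unfolding g_reversible_def by blast
  have fh: "f \<in> hom G G" using f(1) by (simp add: iso_def)
  obtain U0 where U0: "openin T U0" "\<one>\<^bsub>G\<^esub> \<in> U0" "\<not> (\<exists>W. openin T W \<and> \<one>\<^bsub>G\<^esub> \<in> W \<and> W \<subseteq> f ` U0)"
    using tg.U0_exists[OF fh f(2,3)] by blast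
  define R where "R = {card_of N | N. is_network T N}"
  have net1: "is_network T ((\<lambda>x. {x}) ` topspace T)"
    unfolding is_network_def using openin_subset by fastforce
  have "R \<noteq> {}" using net1 unfolding R_def by blast
  moreover have "\<forall>r\<in>R. Card_order r" unfolding R_def using card_of_Card_order by blast
  ultimately obtain r where r: "r \<in> R" "\<forall>r'\<in>R. (r, r') \<in> ordLeq"
    using exists_minim_Card_order[of R] by blast
  then obtain N0 where N0: "is_network T N0" "r = card_of N0" unfolding R_def by blast
  have N0min: "(card_of N0, card_of N) \<in> ordLeq" if "is_network T N" for N
  proof -
    have "card_of N \<in> R" unfolding R_def using that by blast
    then show ?thesis using r(2) N0(2) by blast
  qed
  have infN0: "infinite N0"
  proof
    assume finN0: "finite N0"
    have "inj_on (\<lambda>x. {A \<in> N0. x \<in> A}) (carrier G)"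
    proof (rule inj_onI, rule ccontr)
      fix x y assume xy: "x \<in> carrier G" "y \<in> carrier G" "{A \<in> N0. x \<in> A} = {A \<in> N0. y \<in> A}" "x \<noteq> y"
      then obtain P Q where PQ: "openin T P" "openin T Q" "x \<in> P" "y \<in> Q" "disjnt P Q"
        using haus top unfolding Hausdorff_space_def by metis
      obtain A where A: "A \<in> N0" "x \<in> A" "A \<subseteq> P" using N0(1) PQ unfolding is_network_def by blast
      then have "A \<in> {A \<in> N0. y \<in> A}" using xy(3) by blast
      then show False using A PQ unfolding disjnt_def by blast
    qed
    moreover have "(\<lambda>x. {A \<in> N0. x \<in> A}) ` carrier G \<subseteq> Pow N0" by blast
    ultimately have finc: "finite (carrier G)"
      using finN0 finite_imageD finite_subset by (metis Pow_iff finite_Pow_iff)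
    have "T = discrete_topology (carrier G)"
      using finite_t1_space_imp_discrete_topology[OF top finc Hausdorff_imp_t1_space[OF haus]] .
    then have "open_map T T f"
      unfolding open_map_def using fh by (auto simp: hom_def)
    then show False using f(3) by blast
  qed
  interpret c: constr G T N0 f U0
    using haus N0(1) infN0 f(1,2) U0 by (unfold_locales) auto
  obtain T' B' where T': "hausdorff_group_topology G T'" "is_base T' B'" "(card_of B', card_of N0) \<in> ordLeq"
    "\<not> g_reversible G T'" using c.result by blast
  have "weight_le_netweight T' T"
    unfolding weight_le_netweight_def
    using T'(2,3) N0min ordLeq_transitive by blast
  then show ?thesis using T' by blast
qed

end
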